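(* Assume $f$ and all $g_i$ are $C^1$, and the bounded measurable functions $w_i$ on $[t_k,t_{k+1}]$ satisfy \[ \int_{t_k}^{t_{k+1}}\big(v_i(t)-w_i(t)\big)\,dt=0\qquad(i=1,\dots,m). \] Then the local error is $O(h_k^2)$: there is a constant $C$ depending only on the standing bounds ($K,K_i,L,L_i,\Lambda,V_i$) and on bounds for $\sup|w_i|$ such that $\|x(t_{k+1})-y(t_{k+1})\|\le C\,h_k^2$.
   Context: Setting: for $m\ge 1$ consider on $\mathbb{R}^n$ the input-affine system $\dot x(t)=f(x(t))+\sum_{i=1}^m g_i(x(t))v_i(t)$, where $f,g_i:\mathbb{R}^n\to\mathbb{R}^n$ and each $v_i$ is a Lebesgue measurable function with $|v_i(t)|\le V_i$ for some $V_i>0$. Fix a time step $[t_k,t_{k+1}]$ with $h_k=t_{k+1}-t_k>0$ and $t_{k+1/2}=(t_k+t_{k+1})/2$, and let $x$ be a solution on $[t_k,t_{k+1}]$. Given real-valued bounded measurable functions $w_i$ on $[t_k,t_{k+1}]$, let $y$ be the solution of the approximate system $\dot y(t)=f(y(t))+\sum_{i=1}^m g_i(y(t))w_i(t)$ with $y(t_k)=x(t_k)$. Norms: $\|x\|=\max_j|x_j|$ on $\mathbb{R}^n$, the induced matrix norm $\|Q\|=\max_k\sum_i|q_{ki}|$, and the logarithmic norm $\lambda(Q)=\max_k\big(q_{kk}+\sum_{i\neq k}|q_{ki}|\big)$. Standing bounds: there is a convex set $B$ containing $x(t)$ and $y(t)$ for all $t\in[t_k,t_{k+1}]$ on which $\|f\|\le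 K$, $\|g_i\|\le K_i$, $\|Df\|\le L$, $\|Dg_i\|\le L_i$, $\|D^2f\|\le H$, $\|D^2g_i\|\le H_i$ (whenever these derivatives exist; $D$ is the Jacobian, $D^2$ the second derivative) and $\lambda(Df)\le\Lambda$, with $\Lambda\neq 0$. Put $K'=\sum_{i=1}^m V_iK_i$, $L'=\sum_{i=1}^m V_iL_i$, $H'=\sum_{i=1}^m V_iH_i$. *)

theory Defs
  imports "HOL-Analysis.Analysis"
begin

definition maxnorm :: "real^'n \<Rightarrow> real" where
  "maxnorm x = Max (range (\<lambda>j. \<bar>x $ j\<bar>))"

definition matnorm :: "real^'n^'n \<Rightarrow> real" where
  "matnorm Q = Max (range (\<lambda>k. \<Sum>i\<in>UNIV. \<bar>Q $ k $ i\<bar>))"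

definition lognorm :: "real^'n^'n \<Rightarrow> real" where
  "lognorm Q = Max (range (\<lambda>k. Q $ k $ k + (\<Sum>i\<in>UNIV - {k}. \<bar>Q $ k $ i\<bar>)))"

definition C1_with_jacobian :: "(real^'n \<Rightarrow> real^'n) \<Rightarrow> (real^'n \<Rightarrow> real^'n^'n) \<Rightarrow> bool" where
  "C1_with_jacobian F DF \<longleftrightarrow>
     (\<forall>z. (F has_derivative (\<lambda>u. DF z *v u)) (at z)) \<and> continuous_on UNIV DF"

text \<open>x is a (Caratheodory) solution on [a,b] of  x' = F(x) + sum_{i<m} u_i(t) G_i(x),
  written in integral form.\<close>

definition solves_on ::
  "(real^'n \<Rightarrow> real^'n) \<Rightarrow> (nat \<Rightarrow> real^'n \<Rightarrow> real^'n) \<Rightarrow> nat \<Rightarrow> (nat \<Rightarrow> real \<Rightarrow> real)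
    \<Rightarrow> (real \<Rightarrow> real^'n) \<Rightarrow> real \<Rightarrow> real \<Rightarrow> bool" where
  "solves_on F G m u x a b \<longleftrightarrow>
     (\<forall>t\<in>{a..b}. ((\<lambda>s. F (x s) + (\<Sum>i<m. u i s *\<^sub>R G i (x s))) has_integral (x t - x a)) {a..t})"

end

theory Submission
  imports Defs
begin


lemma maxnorm_comp: "\<bar>x $ j\<bar> \<le> maxnorm x"
  unfolding maxnorm_def by (rule Max_ge) auto

lemma maxnorm_le: "(\<And>j. \<bar>x $ j\<bar> \<le> c) \<Longrightarrow> maxnorm x \<le> c"
  unfolding maxnorm_def by (subst Max_le_iff) auto

lemma maxnorm_nonneg: "0 \<le> maxnorm x"
  using maxnorm_comp[of x] by (meson abs_ge_zero order_trans)

lemma maxnorm_add: "maxnorm (a + b) \<le> maxnorm a + maxnorm b"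
  by (rule maxnorm_le) (smt (verit) maxnorm_comp vector_add_component)

lemma maxnorm_diff: "maxnorm (a - b) \<le> maxnorm a + maxnorm b"
  by (rule maxnorm_le) (smt (verit) maxnorm_comp vector_minus_component)

lemma maxnorm_scale: "maxnorm (r *\<^sub>R a) \<le> \<bar>r\<bar> * maxnorm a"
  by (rule maxnorm_le) (auto simp: abs_mult intro: mult_left_mono maxnorm_comp)

lemma maxnorm_sum: "maxnorm (\<Sum>i\<in>A. f i) \<le> (\<Sum>i\<in>A. maxnorm (f i))"
proof (induction A rule: infinite_finite_induct)
  case (infinite A) then show ?case by simp (rule maxnorm_le, simp)
next
  case empty then show ?case by simp (rule maxnorm_le, simp)
next
  case (insert x F) then show ?case using maxnorm_add[of "f x" "sum f F"] by simp
qed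

lemma matnorm_row: "(\<Sum>i\<in>UNIV. \<bar>Q $ k $ i\<bar>) \<le> matnorm Q"
  unfolding matnorm_def by (rule Max_ge) auto

lemma matnorm_nonneg: "0 \<le> matnorm Q"
  using matnorm_row[of Q] by (meson order_trans sum_nonneg abs_ge_zero)

lemma matnorm_mv: "maxnorm (Q *v d) \<le> matnorm Q * maxnorm d"
proof (rule maxnorm_le)
  fix j
  have "\<bar>(Q *v d) $ j\<bar> = \<bar>\<Sum>i\<in>UNIV. Q $ j $ i * d $ i\<bar>" by (simp add: matrix_vector_mult_def)
  also have "\<dots> \<le> (\<Sum>i\<in>UNIV. \<bar>Q $ j $ i\<bar> * maxnorm d)"
    by (rule order_trans[OF sum_abs]) (auto simp: abs_mult intro!: sum_mono mult_left_mono maxnorm_comp)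
  also have "\<dots> \<le> matnorm Q * maxnorm d"
    by (simp add: sum_distrib_right[symmetric] matnorm_row maxnorm_nonneg mult_right_mono)
  finally show "\<bar>(Q *v d) $ j\<bar> \<le> matnorm Q * maxnorm d" .
qed

lemma maxnorm_integral_bound:
  fixes f :: "real \<Rightarrow> real^'n"
  assumes "(f has_integral I) {a..b}" "a \<le> b" "\<And>s. s \<in> {a..b} \<Longrightarrow> maxnorm (f s) \<le> c"
  shows "maxnorm I \<le> c * (b - a)"
proof (rule maxnorm_le)
  fix j
  have "((\<lambda>s. f s $ j) has_integral I $ j) (cbox a b)"
    using has_integral_linear[OF assms(1) bounded_linear_vec_nth[of j]] by (simp add: o_def)
  moreover have c0: "0 \<le> c" using assms(3)[of a] assms(2) maxnorm_nonneg[of "f a"] by auto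
  moreover have "\<And>s. s \<in> cbox a b \<Longrightarrow> norm (f s $ j) \<le> c"
    using order_trans[OF maxnorm_comp assms(3)] by auto
  ultimately have "norm (I $ j) \<le> c * measure lborel (cbox a b)"
    using has_integral_bound[OF c0, of "\<lambda>s. f s $ j" "I $ j" a b] by auto
  then have "norm (I $ j) \<le> c * (b - a)" using assms(2) by simp
  then show "\<bar>I $ j\<bar> \<le> c * (b - a)" using assms(2) by simp
qed

lemma lipschitz_B:
  fixes F :: "real^'n \<Rightarrow> real^'n"
  assumes C1: "C1_with_jacobian F DF" and B: "convex B"
    and bd: "\<And>z. z \<in> B \<Longrightarrow> matnorm (DF z) \<le> Lb"
    and z1: "z1 \<in> B" and z2: "z2 \<in> B"
  shows "maxnorm (F z1 - F z2) \<le> Lb * maxnorm (z1 - z2)"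
proof (rule maxnorm_le)
  fix j
  define d where "d = z1 - z2"
  define \<phi> where "\<phi> = (\<lambda>t. F (z2 + t *\<^sub>R d) $ j)"
  have der: "DERIV \<phi> t :> (DF (z2 + t *\<^sub>R d) *v d) $ j" for t
  proof -
    have D: "(F has_derivative (\<lambda>u. DF (z2 + t *\<^sub>R d) *v u)) (at (z2 + t *\<^sub>R d))"
      using C1 unfolding C1_with_jacobian_def by blast
    have l: "((\<lambda>t. z2 + t *\<^sub>R d) has_derivative (\<lambda>s. s *\<^sub>R d)) (at t)"
      by (auto intro!: derivative_eq_intros)
    have "((\<lambda>t. F (z2 + t *\<^sub>R d)) has_derivative (\<lambda>s. DF (z2 + t *\<^sub>R d) *v (s *\<^sub>R d))) (at t)"
      using has_derivative_compose[OF l D] by (simp add: o_def)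
    from bounded_linear.has_derivative[OF bounded_linear_vec_nth[of j] this]
    have "(\<phi> has_derivative (\<lambda>s. (DF (z2 + t *\<^sub>R d) *v (s *\<^sub>R d)) $ j)) (at t)"
      by (simp add: \<phi>_def)
    then show ?thesis unfolding has_field_derivative_def
      by (rule has_derivative_eq_rhs) (auto simp: matrix_vector_mult_scaleR fun_eq_iff mult.commute)
  qed
  have "\<exists>z. 0 < z \<and> z < 1 \<and> \<phi> 1 - \<phi> 0 = (1 - 0) * (DF (z2 + z *\<^sub>R d) *v d) $ j"
    by (rule MVT2) (use der in auto)
  then obtain z where z: "0 < z" "z < 1" "\<phi> 1 - \<phi> 0 = (DF (z2 + z *\<^sub>R d) *v d) $ j" by auto
  have zB: "z2 + z *\<^sub>R d \<in> B"
  proof -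
    have "z2 + z *\<^sub>R d = (1 - z) *\<^sub>R z2 + z *\<^sub>R z1" by (simp add: d_def algebra_simps)
    then show ?thesis using convexD[OF B z2 z1, of "1-z" z] z by auto
  qed
  have "\<bar>(F z1 - F z2) $ j\<bar> = \<bar>(DF (z2 + z *\<^sub>R d) *v d) $ j\<bar>"
    using z(3) by (simp add: \<phi>_def d_def)
  also have "\<dots> \<le> matnorm (DF (z2 + z *\<^sub>R d)) * maxnorm d"
    using matnorm_mv maxnorm_comp order_trans by blast
  also have "\<dots> \<le> Lb * maxnorm d"
    by (rule mult_right_mono[OF bd[OF zB] maxnorm_nonneg])
  finally show "\<bar>(F z1 - F z2) $ j\<bar> \<le> Lb * maxnorm (z1 - z2)" by (simp add: d_def)
qed

definition Cst :: "nat \<Rightarrow> real \<Rightarrow> (nat\<Rightarrow>real) \<Rightarrow> real \<Rightarrow> (nat\<Rightarrow>real) \<Rightarrow> (nat\<Rightarrow>real) \<Rightarrow> (nat\<Rightarrow>real) \<Rightarrow> real" where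
 "Cst m K Ki L Li V W = (let Mx = K + (\<Sum>i<m. V i * Ki i); My = K + (\<Sum>i<m. W i * Ki i) in
    L*(Mx+My) + (\<Sum>i<m. W i * Li i * (Mx+My) + (V i + W i) * Li i * Mx))"

lemma main_bound:
  fixes f :: "real^'n \<Rightarrow> real^'n" and g :: "nat \<Rightarrow> real^'n \<Rightarrow> real^'n"
    and x y :: "real \<Rightarrow> real^'n" and tk tk1 :: real
  assumes hlt: "tk < tk1" and Cf: "C1_with_jacobian f Df" and Cg: "\<forall>i<m. C1_with_jacobian (g i) (Dg i)"
    and hv: "\<forall>i<m. V i > 0 \<and> (\<forall>t. \<bar>v i t\<bar> \<le> V i) \<and> v i \<in> borel_measurable (lebesgue_on {tk..tk1})"
    and hw: "\<forall>i<m. (\<forall>t\<in>{tk..tk1}. \<bar>w i t\<bar> \<le> W i) \<and> w i \<in> borel_measurable (lebesgue_on {tk..tk1})"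
    and hint: "\<forall>i<m. integral {tk..tk1} (\<lambda>t. v i t - w i t) = 0"
    and sx: "solves_on f g m v x tk tk1" and sy: "solves_on f g m w y tk tk1"
    and y0: "y tk = x tk" and cB: "convex B" and inB: "\<forall>t\<in>{tk..tk1}. x t \<in> B \<and> y t \<in> B"
    and bf: "\<forall>z\<in>B. maxnorm (f z) \<le> K \<and> matnorm (Df z) \<le> L \<and> lognorm (Df z) \<le> \<Lambda>"
    and bg: "\<forall>i<m. \<forall>z\<in>B. maxnorm (g i z) \<le> Ki i \<and> matnorm (Dg i z) \<le> Li i"
  shows "maxnorm (x tk1 - y tk1) \<le> Cst m K Ki L Li V W * (tk1 - tk)\<^sup>2"
proof -
  define h where "h = tk1 - tk"
  define Mx where "Mx = K + (\<Sum>i<m. V i * Ki i)"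
  define My where "My = K + (\<Sum>i<m. W i * Ki i)"
  have tkI: "tk \<in> {tk..tk1}" using hlt by auto
  have x0B: "x tk \<in> B" using inB tkI by auto
  have W0: "0 \<le> W i" if "i < m" for i using hw that tkI by (meson abs_ge_zero order_trans)
  have V0: "0 \<le> V i" if "i < m" for i using hv that by (meson abs_ge_zero order_trans)
  have Ki0: "0 \<le> Ki i" if "i < m" for i using bg that x0B maxnorm_nonneg order_trans by blast
  have Li0: "0 \<le> Li i" if "i < m" for i using bg that x0B matnorm_nonneg order_trans by blast
  have L0: "0 \<le> L" using bf x0B matnorm_nonneg order_trans by blast
  have K0: "0 \<le> K" using bf x0B maxnorm_nonneg order_trans by blast
  have Mx0: "0 \<le> Mx" unfolding Mx_def using K0 V0 Ki0 by (auto intro!: add_nonneg_nonneg sum_nonneg)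
  have My0: "0 \<le> My" unfolding My_def using K0 W0 Ki0 by (auto intro!: add_nonneg_nonneg sum_nonneg)
  have h0: "0 \<le> h" using hlt h_def by simp
  define Fx where "Fx = (\<lambda>s. f (x s) + (\<Sum>i<m. v i s *\<^sub>R g i (x s)))"
  define Fy where "Fy = (\<lambda>s. f (y s) + (\<Sum>i<m. w i s *\<^sub>R g i (y s)))"
  have Fxb: "maxnorm (Fx s) \<le> Mx" if s: "s \<in> {tk..tk1}" for s
  proof -
    have xB: "x s \<in> B" using inB s by auto
    have "maxnorm (Fx s) \<le> maxnorm (f (x s)) + (\<Sum>i<m. maxnorm (v i s *\<^sub>R g i (x s)))"
      unfolding Fx_def using maxnorm_add maxnorm_sum add_left_mono order_trans by blast
    also have "\<dots> \<le> K + (\<Sum>i<m. V i * Ki i)"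
    proof (rule add_mono)
      show "maxnorm (f (x s)) \<le> K" using bf xB by auto
      show "(\<Sum>i<m. maxnorm (v i s *\<^sub>R g i (x s))) \<le> (\<Sum>i<m. V i * Ki i)"
      proof (rule sum_mono)
        fix i assume "i \<in> {..<m}"
        then have i: "i < m" by simp
        have "maxnorm (v i s *\<^sub>R g i (x s)) \<le> \<bar>v i s\<bar> * maxnorm (g i (x s))" by (rule maxnorm_scale)
        also have "\<dots> \<le> V i * Ki i"
          using hv bg i xB by (intro mult_mono) (auto simp: maxnorm_nonneg V0)
        finally show "maxnorm (v i s *\<^sub>R g i (x s)) \<le> V i * Ki i" .
      qed
    qed
    finally show ?thesis by (simp add: Mx_def)
  qed
  have Fyb: "maxnorm (Fy s) \<le> My" if s: "s \<in> {tk..tk1}" for s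
  proof -
    have yB: "y s \<in> B" using inB s by auto
    have "maxnorm (Fy s) \<le> maxnorm (f (y s)) + (\<Sum>i<m. maxnorm (w i s *\<^sub>R g i (y s)))"
      unfolding Fy_def using maxnorm_add maxnorm_sum add_left_mono order_trans by blast
    also have "\<dots> \<le> K + (\<Sum>i<m. W i * Ki i)"
    proof (rule add_mono)
      show "maxnorm (f (y s)) \<le> K" using bf yB by auto
      show "(\<Sum>i<m. maxnorm (w i s *\<^sub>R g i (y s))) \<le> (\<Sum>i<m. W i * Ki i)"
      proof (rule sum_mono)
        fix i assume "i \<in> {..<m}"
        then have i: "i < m" by simp
        have "maxnorm (w i s *\<^sub>R g i (y s)) \<le> \<bar>w i s\<bar> * maxnorm (g i (y s))" by (rule maxnorm_scale)
        also have "\<dots> \<le> W i * Ki i"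
          using hw bg i yB s by (intro mult_mono) (auto simp: maxnorm_nonneg W0)
        finally show "maxnorm (w i s *\<^sub>R g i (y s)) \<le> W i * Ki i" .
      qed
    qed
    finally show ?thesis by (simp add: My_def)
  qed
  have xdev: "maxnorm (x s - x tk) \<le> Mx * h" if s: "s \<in> {tk..tk1}" for s
  proof -
    have "(Fx has_integral (x s - x tk)) {tk..s}" using sx s unfolding solves_on_def Fx_def by auto
    then have "maxnorm (x s - x tk) \<le> Mx * (s - tk)"
      by (rule maxnorm_integral_bound) (use s Fxb in auto)
    also have "\<dots> \<le> Mx * h" using s Mx0 by (auto simp: h_def intro!: mult_left_mono)
    finally show ?thesis .
  qed
  have ydev: "maxnorm (y s - y tk) \<le> My * h" if s: "s \<in> {tk..tk1}" for s
  proof -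
    have "(Fy has_integral (y s - y tk)) {tk..s}" using sy s unfolding solves_on_def Fy_def by auto
    then have "maxnorm (y s - y tk) \<le> My * (s - tk)"
      by (rule maxnorm_integral_bound) (use s Fyb in auto)
    also have "\<dots> \<le> My * h" using s My0 by (auto simp: h_def intro!: mult_left_mono)
    finally show ?thesis .
  qed
  have xy: "maxnorm (x s - y s) \<le> (Mx + My) * h" if s: "s \<in> {tk..tk1}" for s
  proof -
    have "x s - y s = (x s - x tk) - (y s - y tk)" using y0 by simp
    then have "maxnorm (x s - y s) \<le> maxnorm (x s - x tk) + maxnorm (y s - y tk)"
      using maxnorm_diff by metis
    then show ?thesis using xdev[OF s] ydev[OF s] by (simp add: algebra_simps)
  qed
  have vw_int: "((\<lambda>t. v i t - w i t) has_integral 0) {tk..tk1}" if i: "i < m" for i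
  proof -
    have "(\<lambda>t. v i t - w i t) integrable_on {tk..tk1}"
    proof (rule measurable_bounded_by_integrable_imp_integrable[where g="\<lambda>_. V i + W i"])
      show "(\<lambda>t. v i t - w i t) \<in> borel_measurable (lebesgue_on {tk..tk1})"
        using hv hw i by (intro borel_measurable_diff) auto
      show "(\<lambda>_. V i + W i) integrable_on {tk..tk1}" by (rule Henstock_Kurzweil_Integration.integrable_const_ivl)
      show "norm (v i t - w i t) \<le> V i + W i" if "t \<in> {tk..tk1}" for t
        using hv hw i that by (smt (verit) real_norm_def)
      show "{tk..tk1} \<in> sets lebesgue" by simp
    qed
    then show ?thesis using hint i by (metis integrable_integral)
  qed
  define G where "G = (\<lambda>s. \<Sum>i<m. (v i s - w i s) *\<^sub>R g i (x tk))"
  have G_int: "(G has_integral 0) {tk..tk1}"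
  proof -
    have "((\<lambda>s. \<Sum>i<m. (v i s - w i s) *\<^sub>R g i (x tk)) has_integral (\<Sum>i<m. 0 *\<^sub>R g i (x tk))) {tk..tk1}"
      by (intro has_integral_sum) (auto intro: has_integral_scaleR_left[OF vw_int, simplified])
    then show ?thesis by (simp add: G_def)
  qed
  have D_int: "((\<lambda>s. Fx s - Fy s - G s) has_integral (x tk1 - y tk1)) {tk..tk1}"
  proof -
    have "(Fx has_integral (x tk1 - x tk)) {tk..tk1}" using sx hlt unfolding solves_on_def Fx_def by auto
    moreover have "(Fy has_integral (y tk1 - y tk)) {tk..tk1}" using sy hlt unfolding solves_on_def Fy_def by auto
    ultimately have "((\<lambda>s. Fx s - Fy s - G s) has_integral ((x tk1 - x tk) - (y tk1 - y tk) - 0)) {tk..tk1}"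
      by (intro has_integral_diff G_int)
    then show ?thesis using y0 by simp
  qed
  define c where "c = L*(Mx+My) + (\<Sum>i<m. W i * Li i * (Mx+My) + (V i + W i) * Li i * Mx)"
  have Db: "maxnorm (Fx s - Fy s - G s) \<le> c * h" if s: "s \<in> {tk..tk1}" for s
  proof -
    have xB: "x s \<in> B" and yB: "y s \<in> B" using inB s by auto
    have eq: "Fx s - Fy s - G s = (f (x s) - f (y s)) + (\<Sum>i<m. w i s *\<^sub>R (g i (x s) - g i (y s)) + (v i s - w i s) *\<^sub>R (g i (x s) - g i (x tk)))"
      by (simp add: Fx_def Fy_def G_def sum_subtractf[symmetric] sum.distrib[symmetric] algebra_simps)
    have "maxnorm (Fx s - Fy s - G s) \<le> maxnorm (f (x s) - f (y s)) + (\<Sum>i<m. maxnorm (w i s *\<^sub>R (g i (x s) - g i (y s))) + maxnorm ((v i s - w i s) *\<^sub>R (g i (x s) - g i (x tk))))"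
      unfolding eq
      by (rule order_trans[OF maxnorm_add add_left_mono[OF order_trans[OF maxnorm_sum sum_mono[OF maxnorm_add]]]])
    also have "\<dots> \<le> L * ((Mx + My) * h) + (\<Sum>i<m. W i * (Li i * ((Mx + My) * h)) + (V i + W i) * (Li i * (Mx * h)))"
    proof (rule add_mono)
      have "maxnorm (f (x s) - f (y s)) \<le> L * maxnorm (x s - y s)"
        by (rule lipschitz_B[OF Cf cB _ xB yB]) (use bf in auto)
      also have "\<dots> \<le> L * ((Mx + My) * h)" by (rule mult_left_mono[OF xy[OF s] L0])
      finally show "maxnorm (f (x s) - f (y s)) \<le> L * ((Mx + My) * h)" .
      show "(\<Sum>i<m. maxnorm (w i s *\<^sub>R (g i (x s) - g i (y s))) + maxnorm ((v i s - w i s) *\<^sub>R (g i (x s) - g i (x tk))))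
            \<le> (\<Sum>i<m. W i * (Li i * ((Mx + My) * h)) + (V i + W i) * (Li i * (Mx * h)))"
      proof (rule sum_mono)
        fix i assume "i \<in> {..<m}"
        then have i: "i < m" by simp
        have lg1: "maxnorm (g i (x s) - g i (y s)) \<le> Li i * maxnorm (x s - y s)"
          by (rule lipschitz_B[of "g i" "Dg i" B]) (use Cg bg i xB yB cB in auto)
        have lg2: "maxnorm (g i (x s) - g i (x tk)) \<le> Li i * maxnorm (x s - x tk)"
          by (rule lipschitz_B[of "g i" "Dg i" B]) (use Cg bg i xB x0B cB in auto)
        have a1: "maxnorm (w i s *\<^sub>R (g i (x s) - g i (y s))) \<le> W i * (Li i * ((Mx + My) * h))"
        proof -
          have "maxnorm (w i s *\<^sub>R (g i (x s) - g i (y s))) \<le> \<bar>w i s\<bar> * maxnorm (g i (x s) - g i (y s))"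
            by (rule maxnorm_scale)
          also have "\<dots> \<le> W i * (Li i * ((Mx + My) * h))"
            using hw i s lg1 xy[OF s] Li0[OF i] W0[OF i]
            by (intro mult_mono) (auto simp: maxnorm_nonneg intro: order_trans mult_left_mono)
          finally show ?thesis .
        qed
        have a2: "maxnorm ((v i s - w i s) *\<^sub>R (g i (x s) - g i (x tk))) \<le> (V i + W i) * (Li i * (Mx * h))"
        proof -
          have "maxnorm ((v i s - w i s) *\<^sub>R (g i (x s) - g i (x tk))) \<le> \<bar>v i s - w i s\<bar> * maxnorm (g i (x s) - g i (x tk))"
            by (rule maxnorm_scale)
          also have "\<dots> \<le> (V i + W i) * (Li i * (Mx * h))"
          proof (rule mult_mono)
            show "\<bar>v i s - w i s\<bar> \<le> V i + W i" using hv hw i s by (smt (verit))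
            show "maxnorm (g i (x s) - g i (x tk)) \<le> Li i * (Mx * h)"
              using lg2 xdev[OF s] Li0[OF i] by (meson order_trans mult_left_mono)
          qed (auto simp: maxnorm_nonneg V0[OF i] W0[OF i])
          finally show ?thesis .
        qed
        show "maxnorm (w i s *\<^sub>R (g i (x s) - g i (y s))) + maxnorm ((v i s - w i s) *\<^sub>R (g i (x s) - g i (x tk)))
              \<le> W i * (Li i * ((Mx + My) * h)) + (V i + W i) * (Li i * (Mx * h))"
          using a1 a2 by simp
      qed
    qed
    also have "\<dots> = c * h" by (simp add: c_def algebra_simps sum_distrib_right sum_distrib_left)
    finally show ?thesis .
  qed
  have "maxnorm (x tk1 - y tk1) \<le> (c * h) * (tk1 - tk)"
    by (rule maxnorm_integral_bound[OF D_int]) (use hlt Db in auto)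
  also have "\<dots> = Cst m K Ki L Li V W * (tk1 - tk)\<^sup>2"
    by (simp add: c_def Cst_def Let_def Mx_def My_def h_def power2_eq_square)
  finally show ?thesis .
qed


theorem mainTheorem2:
  fixes m :: nat
  assumes "m \<ge> 1"
  shows "\<exists>C :: real \<Rightarrow> (nat \<Rightarrow> real) \<Rightarrow> real \<Rightarrow> (nat \<Rightarrow> real) \<Rightarrow> real
                \<Rightarrow> (nat \<Rightarrow> real) \<Rightarrow> (nat \<Rightarrow> real) \<Rightarrow> real.
    \<forall>(f :: real^'n \<Rightarrow> real^'n) (Df :: real^'n \<Rightarrow> real^'n^'n)
      (g :: nat \<Rightarrow> real^'n \<Rightarrow> real^'n) (Dg :: nat \<Rightarrow> real^'n \<Rightarrow> real^'n^'n)
      (v :: nat \<Rightarrow> real \<Rightarrow> real) (w :: nat \<Rightarrow> real \<Rightarrow> real)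
      (V :: nat \<Rightarrow> real) (W :: nat \<Rightarrow> real)
      (K :: real) (Ki :: nat \<Rightarrow> real) (L :: real) (Li :: nat \<Rightarrow> real) (\<Lambda> :: real)
      (B :: (real^'n) set) (x :: real \<Rightarrow> real^'n) (y :: real \<Rightarrow> real^'n) (tk :: real) (tk1 :: real).
      tk < tk1
      \<and> C1_with_jacobian f Df
      \<and> (\<forall>i<m. C1_with_jacobian (g i) (Dg i))
      \<and> (\<forall>i<m. V i > 0 \<and> (\<forall>t. \<bar>v i t\<bar> \<le> V i)
               \<and> v i \<in> borel_measurable (lebesgue_on {tk..tk1}))
      \<and> (\<forall>i<m. (\<forall>t\<in>{tk..tk1}. \<bar>w i t\<bar> \<le> W i)
               \<and> w i \<in> borel_measurable (lebesgue_on {tk..tk1}))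
      \<and> (\<forall>i<m. integral {tk..tk1} (\<lambda>t. v i t - w i t) = 0)
      \<and> solves_on f g m v x tk tk1
      \<and> solves_on f g m w y tk tk1
      \<and> y tk = x tk
      \<and> convex B
      \<and> (\<forall>t\<in>{tk..tk1}. x t \<in> B \<and> y t \<in> B)
      \<and> (\<forall>z\<in>B. maxnorm (f z) \<le> K \<and> matnorm (Df z) \<le> L \<and> lognorm (Df z) \<le> \<Lambda>)
      \<and> (\<forall>i<m. \<forall>z\<in>B. maxnorm (g i z) \<le> Ki i \<and> matnorm (Dg i z) \<le> Li i)
      \<and> \<Lambda> \<noteq> 0
      \<longrightarrow> maxnorm (x tk1 - y tk1) \<le> C K Ki L Li \<Lambda> V W * (tk1 - tk)\<^sup>2"
    apply (rule exI[of _ "\<lambda>K Ki L Li \<Lambda> V W. Cst m K Ki L Li V W"])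
  apply (intro allI impI)
  apply (elim conjE)
  apply (rule main_bound)
                 apply assumption+
  done

end
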